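(* Let $I$ be a squarefree monomial ideal of $Q=\Bbbk[x_1,\ldots,x_n]$ and $\mathbb{T}$ the Taylor resolution of $Q/I$ with Gemeda's dg algebra structure. For a variable $x_k$, let $\mathbb{I}_k$ be the subcomplex of $\mathbb{T}$ spanned by the elements $e_V$ and $\partial(e_V)$ for all $V\subseteq G(I)$ such that $V$ contains a monomial divisible by $x_k$. Then $\mathbb{I}_k$ is a dg ideal of $\mathbb{T}$. Moreover, for any set of variables $x_{k_1},\ldots,x_{k_\ell}$, the subcomplex $\mathbb{I}$ spanned by all $e_V$ and $\partial(e_V)$ with $e_V\in\mathbb{I}_{k_r}$ for some $r$ is a dg ideal of $\mathbb{T}$.
   Context: $G(I)$ is the set of minimal monomial generators of $I$ with a fixed total order $<$; $m_U=\mathrm{lcm}(U)$. The Taylor resolution $\mathbb{T}$ has basis $e_U$ ($U\subseteq G(I)$) in degree $|U|$, differential $\partial(e_U)=\sum_{u\in U}(-1)^{|\{v\in U:v<u\}|}\frac{m_U}{m_{U\setminus\{u\}}}e_{U\setminus\{u\}}$, and Gemeda product $e_Ve_W=(-1)^{|\{(v,w)\in V\times W:v>w\}|}\frac{m_Vm_W}{m_{V\cup W}}e_{V\cup W}$ if $V\cap W=\emptyset$, $0$ otherwise. A subcomplex $\mathbb{J}$ of a dg algebra $\mathbb{F}$ is a dg ideal if $\mathbb{F}\mathbb{J}\subseteq\mathbb{J}$. *)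

theory Defs
  imports "HOL-Library.Poly_Mapping"
begin

(* Monomials of Q = k[x_1,...,x_n] are exponent vectors  nat \<Rightarrow>\<^sub>0 nat
   (variable x_v has index v); polynomials are  (nat \<Rightarrow>\<^sub>0 nat) \<Rightarrow>\<^sub>0 'k
   with the convolution product of HOL-Library.Poly_Mapping.
   The minimal generators G(I) = {g 0, ..., g (m-1)} are indexed by {..<m};
   the fixed total order on G(I) is the order of the indices.
   Subsets U \<subseteq> G(I) are represented by index sets U \<subseteq> {..<m}. *)

type_synonym mon = "nat \<Rightarrow>\<^sub>0 nat"
type_synonym 'k qpoly = "mon \<Rightarrow>\<^sub>0 'k"

definition qmon :: "mon \<Rightarrow> 'k::comm_ring_1 qpoly" where
  "qmon a = Poly_Mapping.single a 1"

definition mlcm :: "(nat \<Rightarrow> mon) \<Rightarrow> nat set \<Rightarrow> mon" where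
  "mlcm g U = Abs_poly_mapping (\<lambda>v. Max (insert 0 ((\<lambda>i. Poly_Mapping.lookup (g i) v) ` U)))"

definition mdvd :: "mon \<Rightarrow> mon \<Rightarrow> bool" where
  "mdvd a b \<longleftrightarrow> (\<forall>v. Poly_Mapping.lookup a v \<le> Poly_Mapping.lookup b v)"

definition sqfree_min_gens :: "nat \<Rightarrow> nat \<Rightarrow> (nat \<Rightarrow> mon) \<Rightarrow> bool" where
  "sqfree_min_gens n m g \<longleftrightarrow>
     (\<forall>i<m. Poly_Mapping.keys (g i) \<subseteq> {1..n} \<and> (\<forall>v. Poly_Mapping.lookup (g i) v \<le> 1)) \<and>
     (\<forall>i<m. \<forall>j<m. i \<noteq> j \<longrightarrow> \<not> mdvd (g i) (g j))"

(* Elements of the Taylor resolution T: Q-linear combinations of basis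
   elements e_U, U \<subseteq> {..<m}, represented by coefficient functions. *)
type_synonym 'k telem = "nat set \<Rightarrow> 'k qpoly"

definition taylor :: "nat \<Rightarrow> 'k::comm_ring_1 telem set" where
  "taylor m = {f. \<forall>U. \<not> U \<subseteq> {..<m} \<longrightarrow> f U = 0}"

definition tbasis :: "nat set \<Rightarrow> 'k::comm_ring_1 telem" where
  "tbasis U = (\<lambda>W. if W = U then 1 else 0)"

(* coefficient of e_W in \<partial>(e_U) *)
definition dcoef :: "(nat \<Rightarrow> mon) \<Rightarrow> nat set \<Rightarrow> nat set \<Rightarrow> 'k::comm_ring_1 qpoly" where
  "dcoef g U W =
     (if \<exists>u\<in>U. W = U - {u}
      then (let u = (THE u. u \<in> U \<and> W = U - {u}) in
            (-1) ^ card {v\<in>U. v < u} * qmon (mlcm g U - mlcm g W))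
      else 0)"

definition tdiff :: "nat \<Rightarrow> (nat \<Rightarrow> mon) \<Rightarrow> 'k::comm_ring_1 telem \<Rightarrow> 'k telem" where
  "tdiff m g f = (\<lambda>W. \<Sum>U\<in>Pow {..<m}. f U * dcoef g U W)"

(* coefficient of e_W in the Gemeda product e_V e_V' *)
definition pcoef :: "(nat \<Rightarrow> mon) \<Rightarrow> nat set \<Rightarrow> nat set \<Rightarrow> nat set \<Rightarrow> 'k::comm_ring_1 qpoly" where
  "pcoef g V V' W =
     (if V \<inter> V' = {} \<and> W = V \<union> V'
      then (-1) ^ card {(v, w). v \<in> V \<and> w \<in> V' \<and> v > w}
           * qmon (mlcm g V + mlcm g V' - mlcm g (V \<union> V'))
      else 0)"

definition tmult :: "nat \<Rightarrow> (nat \<Rightarrow> mon) \<Rightarrow> 'k::comm_ring_1 telem \<Rightarrow> 'k telem \<Rightarrow> 'k telem" where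
  "tmult m g f h = (\<lambda>W. \<Sum>V\<in>Pow {..<m}. \<Sum>V'\<in>Pow {..<m}. f V * h V' * pcoef g V V' W)"

definition qspan :: "'k::comm_ring_1 telem set \<Rightarrow> 'k telem set" where
  "qspan S = {f. \<exists>F c. finite F \<and> F \<subseteq> S \<and> f = (\<lambda>W. \<Sum>s\<in>F. c s * s W)}"

definition dg_ideal :: "nat \<Rightarrow> (nat \<Rightarrow> mon) \<Rightarrow> 'k::comm_ring_1 telem set \<Rightarrow> bool" where
  "dg_ideal m g J \<longleftrightarrow>
     J \<subseteq> taylor m \<and>
     (\<lambda>W. 0) \<in> J \<and> (\<forall>a\<in>J. \<forall>b\<in>J. (\<lambda>W. a W + b W) \<in> J) \<and> (\<forall>q. \<forall>a\<in>J. (\<lambda>W. q * a W) \<in> J) \<and>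
     (\<forall>a\<in>J. tdiff m g a \<in> J) \<and>
     (\<forall>a\<in>taylor m. \<forall>b\<in>J. tmult m g a b \<in> J)"

definition hits :: "(nat \<Rightarrow> mon) \<Rightarrow> nat \<Rightarrow> nat set \<Rightarrow> bool" where
  "hits g k V \<longleftrightarrow> (\<exists>i\<in>V. Poly_Mapping.lookup (g i) k \<ge> 1)"

definition Ik :: "nat \<Rightarrow> (nat \<Rightarrow> mon) \<Rightarrow> nat \<Rightarrow> 'k::comm_ring_1 telem set" where
  "Ik m g k = qspan ({tbasis V | V. V \<subseteq> {..<m} \<and> hits g k V}
                    \<union> {tdiff m g (tbasis V) | V. V \<subseteq> {..<m} \<and> hits g k V})"

end

theory Submission
  imports Defs
begin

lemma lookup_mlcm:
  assumes "finite U"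
  shows "Poly_Mapping.lookup (mlcm g U) x = Max (insert 0 ((\<lambda>i. Poly_Mapping.lookup (g i) x) ` U))"
proof -
  have "{v. Max (insert 0 ((\<lambda>i. Poly_Mapping.lookup (g i) v) ` U)) \<noteq> 0} \<subseteq> (\<Union>i\<in>U. Poly_Mapping.keys (g i))"
  proof
    fix v assume "v \<in> {v. Max (insert 0 ((\<lambda>i. Poly_Mapping.lookup (g i) v) ` U)) \<noteq> 0}"
    then have ne: "Max (insert 0 ((\<lambda>i. Poly_Mapping.lookup (g i) v) ` U)) \<noteq> 0" by simp
    have "Max (insert 0 ((\<lambda>i. Poly_Mapping.lookup (g i) v) ` U)) \<in> insert 0 ((\<lambda>i. Poly_Mapping.lookup (g i) v) ` U)"
      using assms by (intro Max_in) auto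
    with ne obtain i where "i \<in> U" "Poly_Mapping.lookup (g i) v \<noteq> 0" by auto
    then show "v \<in> (\<Union>i\<in>U. Poly_Mapping.keys (g i))" by (auto simp: in_keys_iff)
  qed
  moreover have "finite (\<Union>i\<in>U. Poly_Mapping.keys (g i))" using assms by auto
  ultimately have "finite {v. Max (insert 0 ((\<lambda>i. Poly_Mapping.lookup (g i) v) ` U)) \<noteq> 0}"
    by (rule finite_subset)
  then show ?thesis unfolding mlcm_def by simp
qed

lemma mlcm_union:
  assumes "finite A" "finite B"
  shows "Poly_Mapping.lookup (mlcm g (A \<union> B)) x
       = max (Poly_Mapping.lookup (mlcm g A) x) (Poly_Mapping.lookup (mlcm g B) x)"
proof -
  have "insert 0 ((\<lambda>i. Poly_Mapping.lookup (g i) x) ` (A \<union> B))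
      = insert 0 ((\<lambda>i. Poly_Mapping.lookup (g i) x) ` A) \<union> insert 0 ((\<lambda>i. Poly_Mapping.lookup (g i) x) ` B)"
    by auto
  moreover have "Max (insert 0 ((\<lambda>i. Poly_Mapping.lookup (g i) x) ` A) \<union> insert 0 ((\<lambda>i. Poly_Mapping.lookup (g i) x) ` B))
     = max (Max (insert 0 ((\<lambda>i. Poly_Mapping.lookup (g i) x) ` A))) (Max (insert 0 ((\<lambda>i. Poly_Mapping.lookup (g i) x) ` B)))"
    using assms by (intro Max_Un) auto
  moreover have "finite (A \<union> B)" using assms by simp
  ultimately show ?thesis using assms by (simp only: lookup_mlcm)
qed

lemma mlcm_mono:
  assumes "finite B" "A \<subseteq> B"
  shows "Poly_Mapping.lookup (mlcm g A) x \<le> Poly_Mapping.lookup (mlcm g B) x"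
proof -
  have "finite A" using assms finite_subset by auto
  show ?thesis unfolding lookup_mlcm[OF \<open>finite A\<close>] lookup_mlcm[OF assms(1)]
    by (rule Max_mono) (use assms in auto)
qed

lemma qmon_add: "qmon a * qmon b = (qmon (a + b) :: 'k::comm_ring_1 qpoly)"
  unfolding qmon_def by (simp add: mult_single)

lemma dcoef_remove:
  assumes "v \<in> V"
  shows "dcoef g V (V - {v}) = (-1) ^ card {x\<in>V. x < v} * (qmon (mlcm g V - mlcm g (V - {v})) :: 'k::comm_ring_1 qpoly)"
proof -
  have "(THE u. u \<in> V \<and> V - {v} = V - {u}) = v"
  proof (rule the_equality)
    show "v \<in> V \<and> V - {v} = V - {v}" using assms by simp
  next
    fix u assume u: "u \<in> V \<and> V - {v} = V - {u}"
    show "u = v"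
    proof (rule ccontr)
      assume "u \<noteq> v"
      then have "u \<in> V - {v}" using u by auto
      then show False using u by auto
    qed
  qed
  then show ?thesis using assms unfolding dcoef_def by auto
qed

lemma dcoef_sum:
  assumes "finite V"
  shows "dcoef g V W = (\<Sum>v\<in>V. if W = V - {v} then dcoef g V (V - {v}) else (0 :: 'k::comm_ring_1 qpoly))"
proof (cases "\<exists>u\<in>V. W = V - {u}")
  case True
  then obtain u where u: "u \<in> V" "W = V - {u}" by auto
  have "(\<Sum>v\<in>V. if W = V - {v} then dcoef g V (V - {v}) else (0 :: 'k qpoly))
      = (\<Sum>v\<in>V. if v = u then dcoef g V (V - {v}) else 0)"
    using u by (intro sum.cong) auto
  also have "\<dots> = dcoef g V W" using u assms by simp
  finally show ?thesis by simp
next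
  case False
  then show ?thesis unfolding dcoef_def by auto
qed

lemma tdiff_tbasis:
  assumes "V \<subseteq> {..<m}"
  shows "tdiff m g (tbasis V) = (\<lambda>W. dcoef g V W :: 'k::comm_ring_1 qpoly)"
proof
  fix W
  have "tdiff m g (tbasis V :: 'k telem) W = (\<Sum>U\<in>Pow {..<m}. if U = V then dcoef g U W else (0::'k qpoly))"
    unfolding tdiff_def tbasis_def by (intro sum.cong) auto
  also have "\<dots> = dcoef g V W" using assms by simp
  finally show "tdiff m g (tbasis V :: 'k telem) W = dcoef g V W" .
qed

lemma tmult_tbasis_left:
  assumes "U \<subseteq> {..<m}"
  shows "tmult m g (tbasis U) b W = (\<Sum>V'\<in>Pow {..<m}. b V' * pcoef g U V' W :: 'k::comm_ring_1 qpoly)"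
proof -
  have "tmult m g (tbasis U) b W = (\<Sum>V\<in>Pow {..<m}. if V = U then (\<Sum>V'\<in>Pow {..<m}. b V' * pcoef g V V' W) else 0)"
    unfolding tmult_def tbasis_def by (intro sum.cong) auto
  also have "\<dots> = (\<Sum>V'\<in>Pow {..<m}. b V' * pcoef g U V' W)" using assms by simp
  finally show ?thesis .
qed

lemma tmult_decomp:
  "tmult m g a b W = (\<Sum>U\<in>Pow {..<m}. a U * tmult m g (tbasis U) b W :: 'k::comm_ring_1 qpoly)"
proof -
  have "tmult m g a b W = (\<Sum>U\<in>Pow {..<m}. a U * (\<Sum>V'\<in>Pow {..<m}. b V' * pcoef g U V' W))"
    unfolding tmult_def by (simp add: sum_distrib_left mult.assoc)
  also have "\<dots> = (\<Sum>U\<in>Pow {..<m}. a U * tmult m g (tbasis U) b W)"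
    by (intro sum.cong) (auto simp: tmult_tbasis_left)
  finally show ?thesis .
qed

lemma tmult_linear2:
  "tmult m g a (\<lambda>W. \<Sum>s\<in>F. c s * f s W) W = (\<Sum>s\<in>F. c s * tmult m g a (f s) W :: 'k::comm_ring_1 qpoly)"
  unfolding tmult_def
  by (simp add: sum_distrib_left sum_distrib_right mult_ac sum.swap[of _ F])

lemma tdiff_linear:
  "tdiff m g (\<lambda>W. \<Sum>s\<in>F. c s * f s W) W = (\<Sum>s\<in>F. c s * tdiff m g (f s) W :: 'k::comm_ring_1 qpoly)"
  unfolding tdiff_def
  by (simp add: sum_distrib_left sum_distrib_right mult_ac sum.swap[of _ F])

lemma qspan_gen: "s \<in> S \<Longrightarrow> s \<in> qspan S"
  unfolding qspan_def by (rule CollectI, rule exI[of _ "{s}"], rule exI[of _ "\<lambda>_. 1"]) auto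

lemma qspan_zero: "(\<lambda>W. 0) \<in> qspan S"
  unfolding qspan_def by (rule CollectI, rule exI[of _ "{}"]) auto

lemma qspan_smult: "a \<in> qspan S \<Longrightarrow> (\<lambda>W. q * a W) \<in> qspan S"
proof -
  assume "a \<in> qspan S"
  then obtain F c where F: "finite F" "F \<subseteq> S" "a = (\<lambda>W. \<Sum>s\<in>F. c s * s W)"
    unfolding qspan_def by blast
  show ?thesis unfolding qspan_def
    by (rule CollectI, rule exI[of _ F], rule exI[of _ "\<lambda>s. q * c s"])
       (simp add: F sum_distrib_left mult.assoc)
qed

lemma qspan_add: "a \<in> qspan S \<Longrightarrow> b \<in> qspan S \<Longrightarrow> (\<lambda>W. a W + b W) \<in> qspan S"
proof -
  assume "a \<in> qspan S" "b \<in> qspan S"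
  then obtain F c G d where F: "finite F" "F \<subseteq> S" "a = (\<lambda>W. \<Sum>s\<in>F. c s * s W)"
    and G: "finite G" "G \<subseteq> S" "b = (\<lambda>W. \<Sum>s\<in>G. d s * s W)"
    unfolding qspan_def by blast
  define e where "e s = (if s \<in> F then c s else 0) + (if s \<in> G then d s else 0)" for s
  have "(\<lambda>W. a W + b W) = (\<lambda>W. \<Sum>s\<in>F \<union> G. e s * s W)"
  proof
    fix W
    have "(\<Sum>s\<in>F \<union> G. e s * s W) = (\<Sum>s\<in>F \<union> G. (if s \<in> F then c s * s W else 0)
          + (if s \<in> G then d s * s W else 0))"
      by (intro sum.cong) (auto simp: e_def distrib_right)
    also have "\<dots> = (\<Sum>s\<in>F \<union> G. (if s \<in> F then c s * s W else 0))
          + (\<Sum>s\<in>F \<union> G. (if s \<in> G then d s * s W else 0))"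
      by (rule sum.distrib)
    also have "\<dots> = (\<Sum>s\<in>F. c s * s W) + (\<Sum>s\<in>G. d s * s W)"
    proof -
      have "(\<Sum>s\<in>F \<union> G. (if s \<in> F then c s * s W else 0)) = (\<Sum>s\<in>(F \<union> G) \<inter> F. c s * s W)"
        by (rule sum.inter_restrict[symmetric]) (use F G in simp)
      moreover have "(\<Sum>s\<in>F \<union> G. (if s \<in> G then d s * s W else 0)) = (\<Sum>s\<in>(F \<union> G) \<inter> G. d s * s W)"
        by (rule sum.inter_restrict[symmetric]) (use F G in simp)
      moreover have "(F \<union> G) \<inter> F = F" "(F \<union> G) \<inter> G = G" by auto
      ultimately show ?thesis by simp
    qed
    finally show "a W + b W = (\<Sum>s\<in>F \<union> G. e s * s W)" using F G by simp
  qed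
  then show ?thesis unfolding qspan_def using F G by blast
qed

lemma qspan_sum:
  assumes "finite A" "\<And>i. i \<in> A \<Longrightarrow> f i \<in> qspan S"
  shows "(\<lambda>W. \<Sum>i\<in>A. c i * f i W) \<in> qspan S"
  using assms
proof (induction A rule: finite_induct)
  case empty
  then show ?case using qspan_zero by simp
next
  case (insert x A)
  have "(\<lambda>W. c x * f x W + (\<Sum>i\<in>A. c i * f i W)) \<in> qspan S"
    using insert by (intro qspan_add qspan_smult) auto
  then show ?case using insert by simp
qed

lemma qspan_diff: "a \<in> qspan S \<Longrightarrow> b \<in> qspan S \<Longrightarrow> (\<lambda>W. a W - b W) \<in> qspan S"
proof -
  assume "a \<in> qspan S" "b \<in> qspan S"
  then have "(\<lambda>W. a W + (-1) * b W) \<in> qspan S" by (intro qspan_add qspan_smult)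
  then show ?thesis by simp
qed

lemma qspan_subset: "S \<subseteq> qspan T \<Longrightarrow> qspan S \<subseteq> qspan T"
proof
  fix f assume "S \<subseteq> qspan T" "f \<in> qspan S"
  then obtain F c where F: "finite F" "F \<subseteq> S" "f = (\<lambda>W. \<Sum>s\<in>F. c s * s W)"
    unfolding qspan_def by blast
  show "f \<in> qspan T" unfolding F(3) using F \<open>S \<subseteq> qspan T\<close> by (intro qspan_sum) auto
qed

lemma tdiff_repr:
  assumes "V \<subseteq> {..<m}"
  shows "tdiff m g (tbasis V) = (\<lambda>W. \<Sum>v\<in>V. dcoef g V (V - {v}) * tbasis (V - {v}) W :: 'k::comm_ring_1 qpoly)"
proof
  fix W
  have fin: "finite V" using assms finite_subset by auto
  have "tdiff m g (tbasis V :: 'k telem) W = dcoef g V W" using assms by (simp add: tdiff_tbasis)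
  also have "\<dots> = (\<Sum>v\<in>V. if W = V - {v} then dcoef g V (V - {v}) else 0)" using fin by (rule dcoef_sum)
  also have "\<dots> = (\<Sum>v\<in>V. dcoef g V (V - {v}) * tbasis (V - {v}) W)"
    by (intro sum.cong) (auto simp: tbasis_def)
  finally show "tdiff m g (tbasis V :: 'k telem) W = (\<Sum>v\<in>V. dcoef g V (V - {v}) * tbasis (V - {v}) W)" .
qed

lemma antisym_sum:
  fixes F :: "'a \<Rightarrow> 'a \<Rightarrow> 'b::ab_group_add"
  assumes "finite V" "\<And>v w. v \<in> V \<Longrightarrow> w \<in> V \<Longrightarrow> v \<noteq> w \<Longrightarrow> F v w = - F w v"
  shows "(\<Sum>v\<in>V. \<Sum>w\<in>V - {v}. F v w) = 0"
  using assms
proof (induction V rule: finite_induct)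
  case empty
  show ?case by simp
next
  case (insert a V)
  have AS: "\<And>v w. v \<in> insert a V \<Longrightarrow> w \<in> insert a V \<Longrightarrow> v \<noteq> w \<Longrightarrow> F v w = - F w v"
    by (rule insert.prems)
  have IH: "(\<Sum>v\<in>V. \<Sum>w\<in>V - {v}. F v w) = 0" by (rule insert.IH) (rule AS, auto)
  have "(\<Sum>v\<in>insert a V. \<Sum>w\<in>insert a V - {v}. F v w)
      = (\<Sum>w\<in>insert a V - {a}. F a w) + (\<Sum>v\<in>V. \<Sum>w\<in>insert a V - {v}. F v w)"
    using insert.hyps by (simp add: sum.insert)
  also have "(\<Sum>w\<in>insert a V - {a}. F a w) = (\<Sum>w\<in>V. F a w)" using insert.hyps by simp
  also have "(\<Sum>v\<in>V. \<Sum>w\<in>insert a V - {v}. F v w) = (\<Sum>v\<in>V. F v a + (\<Sum>w\<in>V - {v}. F v w))"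
  proof (intro sum.cong refl)
    fix v assume "v \<in> V"
    then have "insert a V - {v} = insert a (V - {v})" "a \<notin> V - {v}" using insert.hyps by auto
    then show "(\<Sum>w\<in>insert a V - {v}. F v w) = F v a + (\<Sum>w\<in>V - {v}. F v w)"
      using insert.hyps by simp
  qed
  also have "\<dots> = (\<Sum>v\<in>V. F v a)" using IH by (simp add: sum.distrib)
  also have "(\<Sum>w\<in>V. F a w) + (\<Sum>v\<in>V. F v a) = (\<Sum>v\<in>V. F a v + F v a)" by (simp add: sum.distrib)
  also have "\<dots> = 0"
  proof (rule sum.neutral, rule ballI)
    fix v assume "v \<in> V"
    then have "a \<noteq> v" using insert.hyps by auto
    then have "F a v = - F v a" using \<open>v \<in> V\<close> by (intro AS) auto
    then show "F a v + F v a = 0" by simp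
  qed
  finally show ?case .
qed

lemma mon_telescope:
  assumes "finite C" "A \<subseteq> B" "B \<subseteq> C"
  shows "(mlcm g C - mlcm g B) + (mlcm g B - mlcm g A) = mlcm g C - mlcm g A"
proof (rule poly_mapping_eqI)
  fix x
  have "finite B" using assms finite_subset by auto
  have "Poly_Mapping.lookup (mlcm g A) x \<le> Poly_Mapping.lookup (mlcm g B) x"
    using \<open>finite B\<close> assms by (intro mlcm_mono)
  moreover have "Poly_Mapping.lookup (mlcm g B) x \<le> Poly_Mapping.lookup (mlcm g C) x"
    using assms by (intro mlcm_mono)
  ultimately show "Poly_Mapping.lookup ((mlcm g C - mlcm g B) + (mlcm g B - mlcm g A)) x
      = Poly_Mapping.lookup (mlcm g C - mlcm g A) x"
    by (simp add: lookup_add lookup_minus)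
qed

lemma dd_prod:
  assumes "finite V" "v \<in> V" "w \<in> V" "v \<noteq> w"
  shows "dcoef g V (V - {v}) * dcoef g (V - {v}) (V - {v} - {w})
    = (-1) ^ (card {x\<in>V. x < v} + card {x\<in>V - {v}. x < w}) * (qmon (mlcm g V - mlcm g (V - {v} - {w})) :: 'k::comm_ring_1 qpoly)"
proof -
  have w: "w \<in> V - {v}" using assms by auto
  have "(mlcm g V - mlcm g (V - {v})) + (mlcm g (V - {v}) - mlcm g (V - {v} - {w})) = mlcm g V - mlcm g (V - {v} - {w})"
    using assms by (intro mon_telescope) auto
  then have q: "qmon (mlcm g V - mlcm g (V - {v})) * qmon (mlcm g (V - {v}) - mlcm g (V - {v} - {w}))
     = (qmon (mlcm g V - mlcm g (V - {v} - {w})) :: 'k qpoly)"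
    by (simp only: qmon_add)
  have "dcoef g V (V - {v}) * dcoef g (V - {v}) (V - {v} - {w})
    = ((-1) ^ card {x\<in>V. x < v} * (-1) ^ card {x\<in>V - {v}. x < w}) *
      (qmon (mlcm g V - mlcm g (V - {v})) * (qmon (mlcm g (V - {v}) - mlcm g (V - {v} - {w})) :: 'k qpoly))"
    unfolding dcoef_remove[OF assms(2), of g] dcoef_remove[OF w, of g]
    by (simp only: mult.assoc mult.left_commute)
  then show ?thesis unfolding q by (simp only: power_add)
qed

definition ddc :: "(nat \<Rightarrow> mon) \<Rightarrow> nat set \<Rightarrow> nat set \<Rightarrow> nat \<Rightarrow> nat \<Rightarrow> 'k::comm_ring_1 qpoly" where
  "ddc g V W v w = (if W = V - {v} - {w} then dcoef g V (V - {v}) * dcoef g (V - {v}) (V - {v} - {w}) else 0)"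

lemma ddc_antisym_lt:
  assumes "finite V" "v \<in> V" "w \<in> V" "v < w"
  shows "ddc g V W v w = - (ddc g V W w v :: 'k::comm_ring_1 qpoly)"
proof -
  have sets: "V - {w} - {v} = V - {v} - {w}" by auto
  have c1: "{x\<in>V. x < w} = insert v {x\<in>V - {v}. x < w}" using assms by auto
  have "card {x\<in>V. x < w} = Suc (card {x\<in>V - {v}. x < w})"
    unfolding c1 using assms by (intro card_insert_disjoint) auto
  moreover have "{x\<in>V - {w}. x < v} = {x\<in>V. x < v}" using assms by auto
  ultimately have e: "card {x\<in>V. x < w} + card {x\<in>V - {w}. x < v} = Suc (card {x\<in>V. x < v} + card {x\<in>V - {v}. x < w})"
    by simp
  show ?thesis
  proof (cases "W = V - {v} - {w}")
    case True
    have "ddc g V W v w = (-1) ^ (card {x\<in>V. x < v} + card {x\<in>V - {v}. x < w}) * (qmon (mlcm g V - mlcm g (V - {v} - {w})) :: 'k qpoly)"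
      unfolding ddc_def using True dd_prod[OF assms(1,2,3), of g] assms(4) by simp
    moreover have "ddc g V W w v = (-1) ^ (card {x\<in>V. x < w} + card {x\<in>V - {w}. x < v}) * (qmon (mlcm g V - mlcm g (V - {w} - {v})) :: 'k qpoly)"
      unfolding ddc_def using True sets dd_prod[OF assms(1,3,2), of g] assms(4) by simp
    ultimately show ?thesis unfolding e sets by simp
  next
    case False
    then show ?thesis unfolding ddc_def sets by simp
  qed
qed

lemma ddc_antisym:
  assumes "finite V" "v \<in> V" "w \<in> V" "v \<noteq> w"
  shows "ddc g V W v w = - (ddc g V W w v :: 'k::comm_ring_1 qpoly)"
proof (cases "v < w")
  case True
  then show ?thesis using assms ddc_antisym_lt by blast
next
  case False
  then have "w < v" using assms by auto
  then have "ddc g V W w v = - (ddc g V W v w :: 'k qpoly)" using assms ddc_antisym_lt by blast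
  then show ?thesis by simp
qed

lemma dd_zero:
  assumes "V \<subseteq> {..<m}"
  shows "tdiff m g (tdiff m g (tbasis V)) = (\<lambda>W. 0 :: 'k::comm_ring_1 qpoly)"
proof
  fix W
  have fin: "finite V" using assms finite_subset by auto
  have "tdiff m g (tdiff m g (tbasis V :: 'k telem)) W
      = (\<Sum>v\<in>V. dcoef g V (V - {v}) * tdiff m g (tbasis (V - {v})) W)"
    unfolding tdiff_repr[OF assms] by (rule tdiff_linear)
  also have "\<dots> = (\<Sum>v\<in>V. \<Sum>w\<in>V - {v}. ddc g V W v w)"
  proof (intro sum.cong refl)
    fix v assume "v \<in> V"
    have sub: "V - {v} \<subseteq> {..<m}" using assms by auto
    have "dcoef g V (V - {v}) * tdiff m g (tbasis (V - {v})) W = dcoef g V (V - {v}) * dcoef g (V - {v}) W"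
      by (simp add: tdiff_tbasis[OF sub])
    also have "\<dots> = dcoef g V (V - {v}) * (\<Sum>w\<in>V - {v}. if W = V - {v} - {w} then dcoef g (V - {v}) (V - {v} - {w}) else 0)"
      using fin by (subst dcoef_sum) auto
    also have "\<dots> = (\<Sum>w\<in>V - {v}. ddc g V W v w)"
      unfolding sum_distrib_left ddc_def by (intro sum.cong) auto
    finally show "dcoef g V (V - {v}) * tdiff m g (tbasis (V - {v})) W = (\<Sum>w\<in>V - {v}. ddc g V W v w)" .
  qed
  also have "\<dots> = 0" using fin by (intro antisym_sum ddc_antisym) auto
  finally show "tdiff m g (tdiff m g (tbasis V :: 'k telem)) W = 0" .
qed

definition Sp :: "nat \<Rightarrow> (nat \<Rightarrow> mon) \<Rightarrow> (nat \<Rightarrow> bool) \<Rightarrow> 'k::comm_ring_1 telem set" where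
  "Sp m g p = {tbasis V | V. V \<subseteq> {..<m} \<and> (\<exists>i\<in>V. p i)} \<union> {tdiff m g (tbasis V) | V. V \<subseteq> {..<m} \<and> (\<exists>i\<in>V. p i)}"

lemma tbasis_taylor: "V \<subseteq> {..<m} \<Longrightarrow> tbasis V \<in> taylor m"
  unfolding taylor_def tbasis_def by auto

lemma tdiff_taylor: "tdiff m g (f :: 'k::comm_ring_1 telem) \<in> taylor m"
proof -
  have "tdiff m g f W = 0" if "\<not> W \<subseteq> {..<m}" for W
    unfolding tdiff_def
  proof (rule sum.neutral, rule ballI)
    fix U assume U: "U \<in> Pow {..<m}"
    have "(dcoef g U W :: 'k qpoly) = 0" using U that unfolding dcoef_def by auto
    then show "f U * dcoef g U W = 0" by simp
  qed
  then show ?thesis unfolding taylor_def by auto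
qed

lemma qspan_taylor: "S \<subseteq> taylor m \<Longrightarrow> qspan S \<subseteq> taylor m"
proof
  fix f assume S: "S \<subseteq> taylor m" and "f \<in> qspan S"
  then obtain F c where F: "finite F" "F \<subseteq> S" "f = (\<lambda>W. \<Sum>s\<in>F. c s * s W)"
    unfolding qspan_def by blast
  have "(\<Sum>s\<in>F. c s * s U) = 0" if "\<not> U \<subseteq> {..<m}" for U
  proof (rule sum.neutral, rule ballI)
    fix s assume "s \<in> F"
    then have "s \<in> taylor m" using F(2) S by blast
    then show "c s * s U = 0" using that unfolding taylor_def by simp
  qed
  then show "f \<in> taylor m" unfolding taylor_def F(3) by simp
qed

lemma Sp_taylor: "Sp m g p \<subseteq> taylor m"
  unfolding Sp_def using tbasis_taylor tdiff_taylor by blast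

lemma lone_term:
  assumes "T \<subseteq> {..<m}" "t \<in> T" "p t"
  shows "(\<lambda>W. dcoef g T (T - {t}) * tbasis (T - {t}) W) \<in> qspan (Sp m g p :: 'k::comm_ring_1 telem set)"
proof -
  have fin: "finite T" using assms finite_subset by auto
  have D: "tdiff m g (tbasis T) \<in> qspan (Sp m g p :: 'k telem set)"
    using assms by (intro qspan_gen) (auto simp: Sp_def)
  have R: "(\<lambda>W. \<Sum>w\<in>T - {t}. dcoef g T (T - {w}) * tbasis (T - {w}) W) \<in> qspan (Sp m g p :: 'k telem set)"
  proof (rule qspan_sum)
    fix w assume "w \<in> T - {t}"
    then show "tbasis (T - {w}) \<in> qspan (Sp m g p :: 'k telem set)"
      using assms by (intro qspan_gen) (auto simp: Sp_def intro!: exI[of _ "T - {w}"])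
  qed (use fin in simp)
  have "(\<lambda>W. tdiff m g (tbasis T) W - (\<Sum>w\<in>T - {t}. dcoef g T (T - {w}) * tbasis (T - {w}) W)) \<in> qspan (Sp m g p :: 'k telem set)"
    using D R by (rule qspan_diff)
  moreover have "(\<lambda>W. tdiff m g (tbasis T) W - (\<Sum>w\<in>T - {t}. dcoef g T (T - {w}) * tbasis (T - {w}) W))
      = (\<lambda>W. dcoef g T (T - {t}) * tbasis (T - {t}) W :: 'k qpoly)"
    unfolding tdiff_repr[OF assms(1)] using fin assms(2) by (simp add: sum.remove)
  ultimately show ?thesis by simp
qed

lemma tmult_tbasis_tbasis:
  assumes "U \<subseteq> {..<m}" "V \<subseteq> {..<m}"
  shows "tmult m g (tbasis U) (tbasis V) W = (pcoef g U V W :: 'k::comm_ring_1 qpoly)"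
proof -
  have "tmult m g (tbasis U) (tbasis V) W = (\<Sum>V'\<in>Pow {..<m}. if V' = V then pcoef g U V' W else (0::'k qpoly))"
    unfolding tmult_tbasis_left[OF assms(1)] by (intro sum.cong) (auto simp: tbasis_def)
  also have "\<dots> = pcoef g U V W" using assms by simp
  finally show ?thesis .
qed

lemma pcoef_eq:
  assumes "U \<inter> V = {}"
  shows "\<exists>b. pcoef g U V (U \<union> V) = (-1) ^ b * (qmon (mlcm g U + mlcm g V - mlcm g (U \<union> V)) :: 'k::comm_ring_1 qpoly)"
  using assms unfolding pcoef_def by auto

lemma mon_key:
  assumes "finite U" "finite V" "v \<in> V" "v \<notin> U"
  shows "(mlcm g V - mlcm g (V - {v})) + (mlcm g U + mlcm g (V - {v}) - mlcm g (U \<union> (V - {v})))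
       = (mlcm g U + mlcm g V - mlcm g (U \<union> V)) + (mlcm g (U \<union> V) - mlcm g (U \<union> (V - {v})))"
proof (rule poly_mapping_eqI)
  fix x
  have fV: "finite (V - {v})" using assms by simp
  define a where "a = Poly_Mapping.lookup (mlcm g U) x"
  define b where "b = Poly_Mapping.lookup (mlcm g (V - {v})) x"
  define c where "c = Poly_Mapping.lookup (mlcm g V) x"
  have bc: "b \<le> c" unfolding b_def c_def using assms by (intro mlcm_mono) auto
  have u1: "Poly_Mapping.lookup (mlcm g (U \<union> (V - {v}))) x = max a b"
    unfolding a_def b_def using assms fV by (intro mlcm_union) auto
  have u2: "Poly_Mapping.lookup (mlcm g (U \<union> V)) x = max a c"
    unfolding a_def c_def using assms by (intro mlcm_union) auto
  show "Poly_Mapping.lookup ((mlcm g V - mlcm g (V - {v})) + (mlcm g U + mlcm g (V - {v}) - mlcm g (U \<union> (V - {v})))) x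
     = Poly_Mapping.lookup ((mlcm g U + mlcm g V - mlcm g (U \<union> V)) + (mlcm g (U \<union> V) - mlcm g (U \<union> (V - {v})))) x"
    unfolding lookup_add lookup_minus u1 u2 a_def[symmetric] b_def[symmetric] c_def[symmetric]
    using bc by (auto simp: max_def)
qed

lemma neg_one_sq: "(-1) ^ c * (-1) ^ c = (1 :: 'a::comm_ring_1)"
  by (simp add: power_add[symmetric])

lemma mult_basis_basis:
  assumes "U \<subseteq> {..<m}" "V \<subseteq> {..<m}" "\<exists>i\<in>V. p i"
  shows "tmult m g (tbasis U) (tbasis V) \<in> qspan (Sp m g p :: 'k::comm_ring_1 telem set)"
proof (cases "U \<inter> V = {}")
  case True
  have "tbasis (U \<union> V) \<in> qspan (Sp m g p :: 'k telem set)"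
    using assms by (intro qspan_gen) (auto simp: Sp_def intro!: exI[of _ "U \<union> V"])
  then have "(\<lambda>W. pcoef g U V (U \<union> V) * tbasis (U \<union> V) W) \<in> qspan (Sp m g p :: 'k telem set)"
    by (rule qspan_smult)
  moreover have "(\<lambda>W. pcoef g U V (U \<union> V) * tbasis (U \<union> V) W) = tmult m g (tbasis U) (tbasis V :: 'k telem)"
    by (rule ext, subst tmult_tbasis_tbasis[OF assms(1,2)]) (auto simp: tbasis_def pcoef_def)
  ultimately show ?thesis by simp
next
  case False
  have "tmult m g (tbasis U) (tbasis V :: 'k telem) = (\<lambda>W. 0)"
    using False by (intro ext, subst tmult_tbasis_tbasis[OF assms(1,2)]) (auto simp: pcoef_def)
  then show ?thesis using qspan_zero by simp
qed

lemma mult_basis_diff_term: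
  assumes U: "U \<subseteq> {..<m}" and V: "V \<subseteq> {..<m}" and v0: "v0 \<in> V" "p v0" and v: "v \<in> V"
  shows "(\<lambda>W. dcoef g V (V - {v}) * pcoef g U (V - {v}) W) \<in> qspan (Sp m g p :: 'k::comm_ring_1 telem set)"
proof -
  have finU: "finite U" using U finite_subset by auto
  have finV: "finite V" using V finite_subset by auto
  show ?thesis
  proof (cases "U \<inter> (V - {v}) = {}")
    case False
    have "(\<lambda>W. dcoef g V (V - {v}) * pcoef g U (V - {v}) W) = (\<lambda>W. 0 :: 'k qpoly)"
      using False by (intro ext) (simp add: pcoef_def)
    then show ?thesis using qspan_zero by simp
  next
    case disj: True
    have eq: "(\<lambda>W. dcoef g V (V - {v}) * pcoef g U (V - {v}) W)
       = (\<lambda>W. (dcoef g V (V - {v}) * pcoef g U (V - {v}) (U \<union> (V - {v}))) * tbasis (U \<union> (V - {v})) W :: 'k qpoly)"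
      by (rule ext) (auto simp: tbasis_def pcoef_def)
    show ?thesis
    proof (cases "\<exists>i\<in>U \<union> (V - {v}). p i")
      case True
      have "tbasis (U \<union> (V - {v})) \<in> qspan (Sp m g p :: 'k telem set)"
        using True U V by (intro qspan_gen) (auto simp: Sp_def intro!: exI[of _ "U \<union> (V - {v})"])
      then show ?thesis unfolding eq by (rule qspan_smult)
    next
      case False
      then have "v0 = v" using v0 by auto
      then have pv: "p v" using v0 by simp
      have vU: "v \<notin> U" using False pv by auto
      define T where "T = U \<union> V"
      have T: "T \<subseteq> {..<m}" "v \<in> T" unfolding T_def using U V v by auto
      have Tv: "T - {v} = U \<union> (V - {v})" unfolding T_def using vU by auto
      have L: "(\<lambda>W. dcoef g T (T - {v}) * tbasis (T - {v}) W) \<in> qspan (Sp m g p :: 'k telem set)"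
        using lone_term[where p=p and g=g, OF T pv] by simp
      obtain b where b: "pcoef g U (V - {v}) (U \<union> (V - {v}))
          = (-1) ^ b * (qmon (mlcm g U + mlcm g (V - {v}) - mlcm g (U \<union> (V - {v}))) :: 'k qpoly)"
        using pcoef_eq[OF disj] by blast
      define a where "a = card {x\<in>V. x < v}"
      define c where "c = card {x\<in>T. x < v}"
      have da: "dcoef g V (V - {v}) = (-1) ^ a * (qmon (mlcm g V - mlcm g (V - {v})) :: 'k qpoly)"
        unfolding a_def by (rule dcoef_remove[OF v])
      have dc: "dcoef g T (T - {v}) = (-1) ^ c * (qmon (mlcm g (U \<union> V) - mlcm g (U \<union> (V - {v}))) :: 'k qpoly)"
        unfolding c_def using dcoef_remove[OF T(2), of g] Tv T_def by simp
      define q where "q = (-1) ^ (a + b + c) * (qmon (mlcm g U + mlcm g V - mlcm g (U \<union> V)) :: 'k qpoly)"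
      have key: "dcoef g V (V - {v}) * pcoef g U (V - {v}) (U \<union> (V - {v})) = q * dcoef g T (T - {v})"
      proof -
        have "q * dcoef g T (T - {v}) = ((-1) ^ c * (-1) ^ c) * ((-1) ^ a * (-1) ^ b) *
            (qmon (mlcm g U + mlcm g V - mlcm g (U \<union> V)) * qmon (mlcm g (U \<union> V) - mlcm g (U \<union> (V - {v}))) :: 'k qpoly)"
          unfolding q_def dc power_add by (simp only: mult_ac)
        also have "\<dots> = ((-1) ^ a * (-1) ^ b) * qmon ((mlcm g V - mlcm g (V - {v})) + (mlcm g U + mlcm g (V - {v}) - mlcm g (U \<union> (V - {v}))))"
          unfolding neg_one_sq qmon_add mon_key[OF finU finV v vU] by simp
        also have "\<dots> = dcoef g V (V - {v}) * pcoef g U (V - {v}) (U \<union> (V - {v}))"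
          unfolding da b qmon_add[symmetric] by (simp only: mult_ac)
        finally show ?thesis by simp
      qed
      have "(\<lambda>W. q * (dcoef g T (T - {v}) * tbasis (T - {v}) W)) \<in> qspan (Sp m g p :: 'k telem set)"
        using L by (rule qspan_smult)
      moreover have "(\<lambda>W. q * (dcoef g T (T - {v}) * tbasis (T - {v}) W))
         = (\<lambda>W. dcoef g V (V - {v}) * pcoef g U (V - {v}) W)"
        unfolding eq key Tv by (simp add: mult.assoc)
      ultimately show ?thesis by simp
    qed
  qed
qed

lemma mult_basis_diff:
  assumes U: "U \<subseteq> {..<m}" and V: "V \<subseteq> {..<m}" and v0: "\<exists>i\<in>V. p i"
  shows "tmult m g (tbasis U) (tdiff m g (tbasis V)) \<in> qspan (Sp m g p :: 'k::comm_ring_1 telem set)"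
proof -
  have finV: "finite V" using V finite_subset by auto
  have "(\<lambda>W. \<Sum>v\<in>V. 1 * (\<lambda>W. dcoef g V (V - {v}) * pcoef g U (V - {v}) W) W) \<in> qspan (Sp m g p :: 'k telem set)"
  proof (rule qspan_sum)
    obtain i where i: "i \<in> V" "p i" using v0 by blast
    fix v assume "v \<in> V"
    then show "(\<lambda>W. dcoef g V (V - {v}) * pcoef g U (V - {v}) W) \<in> qspan (Sp m g p :: 'k telem set)"
      using mult_basis_diff_term[where p=p and g=g, OF U V i] by blast
  qed (use finV in simp)
  moreover have "tmult m g (tbasis U) (tdiff m g (tbasis V)) = (\<lambda>W. \<Sum>v\<in>V. 1 * (\<lambda>W. dcoef g V (V - {v}) * pcoef g U (V - {v}) W) W :: 'k qpoly)"
  proof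
    fix W
    have "tmult m g (tbasis U) (tdiff m g (tbasis V)) W = (\<Sum>v\<in>V. dcoef g V (V - {v}) * tmult m g (tbasis U) (tbasis (V - {v})) W :: 'k qpoly)"
      unfolding tdiff_repr[OF V] by (rule tmult_linear2)
    also have "\<dots> = (\<Sum>v\<in>V. 1 * (\<lambda>W. dcoef g V (V - {v}) * pcoef g U (V - {v}) W) W)"
    proof (intro sum.cong refl)
      fix v assume "v \<in> V"
      have "V - {v} \<subseteq> {..<m}" using V by auto
      then show "dcoef g V (V - {v}) * tmult m g (tbasis U) (tbasis (V - {v})) W = 1 * (\<lambda>W. dcoef g V (V - {v}) * pcoef g U (V - {v}) W) W"
        by (simp add: tmult_tbasis_tbasis[OF U])
    qed
    finally show "tmult m g (tbasis U) (tdiff m g (tbasis V)) W = (\<Sum>v\<in>V. 1 * (\<lambda>W. dcoef g V (V - {v}) * pcoef g U (V - {v}) W) W :: 'k qpoly)" .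
  qed
  ultimately show ?thesis by simp
qed

lemma dg_Sp: "dg_ideal m g (qspan (Sp m g p) :: 'k::comm_ring_1 telem set)"
  unfolding dg_ideal_def
proof (intro conjI ballI allI)
  show "qspan (Sp m g p) \<subseteq> (taylor m :: 'k telem set)" by (intro qspan_taylor Sp_taylor)
  show "(\<lambda>W. 0) \<in> (qspan (Sp m g p) :: 'k telem set)" by (rule qspan_zero)
  fix a b :: "'k telem"
  assume "a \<in> qspan (Sp m g p)" "b \<in> qspan (Sp m g p)"
  then show "(\<lambda>W. a W + b W) \<in> qspan (Sp m g p)" by (rule qspan_add)
next
  fix q and a :: "'k telem"
  assume "a \<in> qspan (Sp m g p)"
  then show "(\<lambda>W. q * a W) \<in> qspan (Sp m g p)" by (rule qspan_smult)
next
  fix a :: "'k telem"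
  assume "a \<in> qspan (Sp m g p)"
  then obtain F c where F: "finite F" "F \<subseteq> Sp m g p" "a = (\<lambda>W. \<Sum>s\<in>F. c s * s W)"
    unfolding qspan_def by blast
  have "(\<lambda>W. \<Sum>s\<in>F. c s * tdiff m g s W) \<in> qspan (Sp m g p)"
  proof (rule qspan_sum[OF F(1)])
    fix s assume "s \<in> F"
    then have "s \<in> Sp m g p" using F by blast
    then obtain V where V: "V \<subseteq> {..<m}" "\<exists>i\<in>V. p i" and s: "s = tbasis V \<or> s = tdiff m g (tbasis V)"
      unfolding Sp_def by blast
    show "tdiff m g s \<in> qspan (Sp m g p)"
    proof (cases "s = tbasis V")
      case True
      then show ?thesis using V by (intro qspan_gen) (auto simp: Sp_def)
    next
      case False
      then have "tdiff m g s = (\<lambda>W. 0)" using s dd_zero[OF V(1)] by auto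
      then show ?thesis using qspan_zero by simp
    qed
  qed
  moreover have "tdiff m g a = (\<lambda>W. \<Sum>s\<in>F. c s * tdiff m g s W)"
    unfolding F(3) by (rule ext) (rule tdiff_linear[of m g c "\<lambda>s. s" F, simplified])
  ultimately show "tdiff m g a \<in> qspan (Sp m g p)" by simp
next
  fix a b :: "'k telem"
  assume "a \<in> taylor m" "b \<in> qspan (Sp m g p)"
  then obtain F c where F: "finite F" "F \<subseteq> Sp m g p" "b = (\<lambda>W. \<Sum>s\<in>F. c s * s W)"
    unfolding qspan_def by blast
  have inner: "(\<lambda>W. \<Sum>s\<in>F. c s * tmult m g (tbasis U) s W) \<in> qspan (Sp m g p)" if U: "U \<in> Pow {..<m}" for U
  proof (rule qspan_sum[OF F(1)])
    fix s assume "s \<in> F"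
    then have "s \<in> Sp m g p" using F by blast
    then obtain V where V: "V \<subseteq> {..<m}" "\<exists>i\<in>V. p i" and s: "s = tbasis V \<or> s = tdiff m g (tbasis V)"
      unfolding Sp_def by blast
    show "tmult m g (tbasis U) s \<in> qspan (Sp m g p)"
      using s mult_basis_basis[OF _ V] mult_basis_diff[OF _ V] U by auto
  qed
  have "(\<lambda>W. \<Sum>U\<in>Pow {..<m}. a U * (\<lambda>W. \<Sum>s\<in>F. c s * tmult m g (tbasis U) s W) W) \<in> qspan (Sp m g p)"
    by (rule qspan_sum) (use inner in auto)
  moreover have "tmult m g a b = (\<lambda>W. \<Sum>U\<in>Pow {..<m}. a U * (\<lambda>W. \<Sum>s\<in>F. c s * tmult m g (tbasis U) s W) W)"
  proof
    fix W
    show "tmult m g a b W = (\<Sum>U\<in>Pow {..<m}. a U * (\<lambda>W. \<Sum>s\<in>F. c s * tmult m g (tbasis U) s W) W)"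
    proof -
      have "tmult m g a b W = (\<Sum>U\<in>Pow {..<m}. a U * tmult m g (tbasis U) b W)" by (rule tmult_decomp)
      also have "\<dots> = (\<Sum>U\<in>Pow {..<m}. a U * (\<Sum>s\<in>F. c s * tmult m g (tbasis U) s W))"
        unfolding F(3) using tmult_linear2[of m g _ c "\<lambda>s. s" F] by simp
      finally show ?thesis by simp
    qed
  qed
  ultimately show "tmult m g a b \<in> qspan (Sp m g p)" by simp
qed

definition divr :: "nat \<Rightarrow> 'k::comm_ring_1 qpoly \<Rightarrow> bool" where
  "divr r q \<longleftrightarrow> (\<forall>a\<in>Poly_Mapping.keys q. 1 \<le> Poly_Mapping.lookup a r)"

lemma divr_mult: "divr r y \<Longrightarrow> divr r (x * y)"
  unfolding divr_def using keys_mult[of x y] by (force simp: lookup_add)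

lemma divr_add: "divr r x \<Longrightarrow> divr r y \<Longrightarrow> divr r (x + y)"
  unfolding divr_def using keys_add[of x y] by blast

lemma divr_zero: "divr r 0"
  unfolding divr_def by simp

lemma divr_qmon: "1 \<le> Poly_Mapping.lookup a r \<Longrightarrow> divr r (qmon a)"
  unfolding divr_def qmon_def by simp

lemma Ik_div:
  assumes "f \<in> Ik m g r" "\<not> hits g r V"
  shows "divr r ((f :: 'k::comm_ring_1 telem) V)"
proof -
  obtain F c where F: "finite F" "F \<subseteq> {tbasis V | V. V \<subseteq> {..<m} \<and> hits g r V}
                    \<union> {tdiff m g (tbasis V) | V. V \<subseteq> {..<m} \<and> hits g r V}" "f = (\<lambda>W. \<Sum>s\<in>F. c s * s W)"
    using assms(1) unfolding Ik_def qspan_def by blast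
  have gen: "divr r (s V)" if "s \<in> F" for s
  proof -
    from that F(2) obtain V' where V': "V' \<subseteq> {..<m}" "hits g r V'" and s: "s = tbasis V' \<or> s = tdiff m g (tbasis V')"
      by blast
    show ?thesis
    proof (cases "s = tbasis V'")
      case True
      then have "V \<noteq> V'" using V' assms(2) by auto
      then show ?thesis using True by (simp add: tbasis_def divr_zero)
    next
      case False
      then have "s V = tdiff m g (tbasis V') V" using s by auto
      also have "\<dots> = dcoef g V' V" by (simp add: tdiff_tbasis[OF V'(1)])
      finally have sV: "s V = dcoef g V' V" .
      show ?thesis
      proof (cases "\<exists>u\<in>V'. V = V' - {u}")
        case False
        then show ?thesis unfolding sV dcoef_def by (simp add: divr_zero)
      next
        case True
        then obtain u where u: "u \<in> V'" "V = V' - {u}" by blast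
        have finV': "finite V'" using V'(1) finite_subset by auto
        have finV: "finite V" using finV' u by simp
        obtain i where i: "i \<in> V'" "1 \<le> Poly_Mapping.lookup (g i) r" using V'(2) unfolding hits_def by blast
        have "Poly_Mapping.lookup (g i) r \<le> Poly_Mapping.lookup (mlcm g V') r"
          unfolding lookup_mlcm[OF finV'] using finV' i by (intro Max_ge) auto
        moreover have "Poly_Mapping.lookup (mlcm g V) r = 0"
          unfolding lookup_mlcm[OF finV] using assms(2) finV unfolding hits_def
          by (intro antisym Max.boundedI) auto
        ultimately have "1 \<le> Poly_Mapping.lookup (mlcm g V' - mlcm g V) r"
          using i by (simp add: lookup_minus)
        have "s V = dcoef g V' (V' - {u})" using sV u(2) by simp
        then show ?thesis unfolding dcoef_remove[OF u(1)] using \<open>1 \<le> Poly_Mapping.lookup (mlcm g V' - mlcm g V) r\<close> u(2)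
          by (simp add: divr_mult divr_qmon)
      qed
    qed
  qed
  have "divr r (\<Sum>s\<in>F'. c s * s V)" if "F' \<subseteq> F" for F'
    using finite_subset[OF that F(1)] that
  proof (induction F' rule: finite_induct)
    case empty
    then show ?case by (simp add: divr_zero)
  next
    case (insert x F')
    then show ?case using gen by (simp add: divr_add divr_mult)
  qed
  then show ?thesis using F(3) by simp
qed

lemma tbasis_Ik_iff:
  assumes "V \<subseteq> {..<m}"
  shows "((tbasis V :: 'k::field telem) \<in> Ik m g r) \<longleftrightarrow> hits g r V"
proof
  assume "(tbasis V :: 'k telem) \<in> Ik m g r"
  show "hits g r V"
  proof (rule ccontr)
    assume "\<not> hits g r V"
    with \<open>(tbasis V :: 'k telem) \<in> Ik m g r\<close> have "divr r ((tbasis V :: 'k telem) V)" by (rule Ik_div)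
    then show False unfolding divr_def tbasis_def by simp
  qed
next
  assume "hits g r V"
  then show "(tbasis V :: 'k telem) \<in> Ik m g r" unfolding Ik_def using assms by (intro qspan_gen) blast
qed

theorem mainTheorem12:
  fixes n m :: nat and g :: "nat \<Rightarrow> mon" and k :: nat and K :: "nat set"
  assumes gens: "sqfree_min_gens n m g"
    and inj: "inj_on g {..<m}"
    and K: "finite K" "K \<subseteq> {1..n}"
    and k: "k \<in> {1..n}"
  shows "dg_ideal m g (Ik m g k :: 'k::field telem set)
    \<and> dg_ideal m g (qspan
          ({tbasis V | V. V \<subseteq> {..<m} \<and> (\<exists>r\<in>K. (tbasis V :: 'k telem) \<in> Ik m g r)}
           \<union> {tdiff m g (tbasis V) | V. V \<subseteq> {..<m} \<and> (\<exists>r\<in>K. (tbasis V :: 'k telem) \<in> Ik m g r)})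
          :: 'k telem set)"
proof
  have "Ik m g k = (qspan (Sp m g (\<lambda>i. 1 \<le> Poly_Mapping.lookup (g i) k)) :: 'k telem set)"
    unfolding Ik_def Sp_def hits_def by simp
  then show "dg_ideal m g (Ik m g k :: 'k::field telem set)" by (simp only: dg_Sp)
next
  have e: "(V \<subseteq> {..<m} \<and> (\<exists>r\<in>K. (tbasis V :: 'k telem) \<in> Ik m g r))
       \<longleftrightarrow> (V \<subseteq> {..<m} \<and> (\<exists>i\<in>V. \<exists>r\<in>K. 1 \<le> Poly_Mapping.lookup (g i) r))" for V
    using tbasis_Ik_iff[of V m g] unfolding hits_def by blast
  have "({tbasis V | V. V \<subseteq> {..<m} \<and> (\<exists>r\<in>K. (tbasis V :: 'k telem) \<in> Ik m g r)}
           \<union> {tdiff m g (tbasis V) | V. V \<subseteq> {..<m} \<and> (\<exists>r\<in>K. (tbasis V :: 'k telem) \<in> Ik m g r)})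
       = Sp m g (\<lambda>i. \<exists>r\<in>K. 1 \<le> Poly_Mapping.lookup (g i) r)"
    unfolding Sp_def e by simp
  note eqn = this
  show "dg_ideal m g (qspan
          ({tbasis V | V. V \<subseteq> {..<m} \<and> (\<exists>r\<in>K. (tbasis V :: 'k telem) \<in> Ik m g r)}
           \<union> {tdiff m g (tbasis V) | V. V \<subseteq> {..<m} \<and> (\<exists>r\<in>K. (tbasis V :: 'k telem) \<in> Ik m g r)})
          :: 'k telem set)" unfolding eqn by (rule dg_Sp)
qed

end
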